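(* For every $(i,j)\in\mathcal I_1$ there exist integers $z_1,z_2$ and signs such that $$F_{ij}F_{<(i,j)}=\pm q^{z_1}F_{\le(i,j)},\qquad F_{>(i,j)}F_{ij}=\pm q^{z_2}F_{\ge(i,j)}.$$
   Context: Let $m,n\ge 1$, let $q$ be an indeterminate, and let indices range over $[1,m+n]$. Put $q_i=q$ if $i\le m$ and $q_i=q^{-1}$ if $i>m$. Let $\mathcal I_0=\{(i,j):1\le i<j\le m \text{ or } m+1\le i<j\le m+n\}$, $\mathcal I_1=\{(i,j):1\le i\le m<j\le m+n\}$. The quantum supergroup $U_q=U_q(\mathfrak{gl}(m|n))$ is the associative $\mathbb C(q)$-superalgebra generated by $K_j^{\pm1}$ ($j\in[1,m+n]$) and $E_{i,i+1},F_{i,i+1}$ ($1\le i<m+n$), where $K_j^{\pm1}$ and $E_{i,i+1},F_{i,i+1}$ for $i\ne m$ are even and $E_{m,m+1},F_{m,m+1}$ are odd, subject to: $K_iK_j=K_jK_i$, $K_iK_i^{-1}=1$; $K_iE_{j,j+1}K_i^{-1}=q_i^{\delta_{ij}-\delta_{i,j+1}}E_{j,j+1}$, $K_iF_{j,j+1}K_i^{-1}=q_i^{-(\delta_{ij}-\delta_{i,j+1})}F_{j,j+1}$; $[E_{i,i+1},F_{j,j+1}]=\delta_{ij}\frac{K_iK_{i+1}^{-1}-K_i^{-1}K_{i+1}}{q_i-q_i^{-1}}$; $E_{m,m+1}^2=F_{m,m+1}^2=0$; $E_{i,i+1}E_{j,j+1}=E_{j,j+1}E_{i,i+1}$ and $F_{i,i+1}F_{j,j+1}=F_{j,j+1}F_{i,i+1}$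 for $|i-j|>1$; for $|i-j|=1$, $i\neq m$, and $X\in\{E,F\}$: $X_{i,i+1}^2X_{j,j+1}-(q+q^{-1})X_{i,i+1}X_{j,j+1}X_{i,i+1}+X_{j,j+1}X_{i,i+1}^2=0$; and $[E_{m-1,m+2},E_{m,m+1}]=[F_{m-1,m+2},F_{m,m+1}]=0$. Here for homogeneous $x,y$, $[x,y]=xy-(-1)^{\bar x\bar y}yx$. For $i<j$ with $j>i+1$, $E_{ij}=E_{ic}E_{cj}-q_c^{-1}E_{cj}E_{ic}$ and $F_{ij}=-q_cF_{ic}F_{cj}+F_{cj}F_{ic}$ for $i<c<j$ (independent of $c$); $E_{ij},F_{ij}$ are odd iff $(i,j)\in\mathcal I_1$. Order on $\mathcal I_1$: $(i,j)\prec(s,t)$ iff $j>t$, or $j=t$ and $i<s$. For $I\subseteq\mathcal I_1$, $F_I$ is the product of the $F_{ij}$, $(i,j)\in I$, taken in increasing $\prec$-order ($F_\emptyset=1$). For $(i,j)\in\mathcal I_1$, $F_{\ge(i,j)}$, $F_{>(i,j)}$, $F_{\le(i,j)}$, $F_{<(i,j)}$ denote $F_I$ for $I=\{(s,t)\in\mathcal I_1:(s,t)\succeq(i,j)\}$, $\{(s,t):(s,t)\succ(i,j)\}$, $\{(s,t):(s,t)\preceq(i,j)\}$, $\{(s,t):(s,t)\prec(i,j)\}$ respectively. *)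

theory Defs
  imports Complex_Main "HOL-Computational_Algebra.Polynomial" "HOL-Computational_Algebra.Fraction_Field"
begin

text \<open>The coefficient field C(q) is the fraction field of complex polynomials;
  the indeterminate q is the polynomial X.\<close>

type_synonym Cq = "complex poly fract"

definition qq :: Cq where "qq = Fract [:0, 1:] 1"

definition qi :: "nat \<Rightarrow> nat \<Rightarrow> Cq" where
  "qi m i = (if i \<le> m then qq else inverse qq)"

text \<open>A C(q)-algebra structure on a ring 'a: a unital ring homomorphism
  from C(q) into the centre of 'a.\<close>
definition scalar_hom :: "(Cq \<Rightarrow> 'a::ring_1) \<Rightarrow> bool" where
  "scalar_hom \<phi> \<longleftrightarrow> \<phi> 1 = 1 \<and> (\<forall>a b. \<phi> (a + b) = \<phi> a + \<phi> b) \<and>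
     (\<forall>a b. \<phi> (a * b) = \<phi> a * \<phi> b) \<and> (\<forall>a x. \<phi> a * x = x * \<phi> a)"

text \<open>Root vectors: E i stands for E_{i,i+1}, F i for F_{i,i+1}.
  For j > i+1 we use the defining recursion with c = j-1
  (the paper states the result is independent of c).\<close>
fun Eroot :: "nat \<Rightarrow> (Cq \<Rightarrow> 'a::ring_1) \<Rightarrow> (nat \<Rightarrow> 'a) \<Rightarrow> nat \<Rightarrow> nat \<Rightarrow> 'a" where
  "Eroot m \<phi> E i j =
     (if j \<le> i + 1 then E i
      else Eroot m \<phi> E i (j - 1) * E (j - 1)
           - \<phi> (inverse (qi m (j - 1))) * E (j - 1) * Eroot m \<phi> E i (j - 1))"

fun Froot :: "nat \<Rightarrow> (Cq \<Rightarrow> 'a::ring_1) \<Rightarrow> (nat \<Rightarrow> 'a) \<Rightarrow> nat \<Rightarrow> nat \<Rightarrow> 'a" where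
  "Froot m \<phi> F i j =
     (if j \<le> i + 1 then F i
      else - (\<phi> (qi m (j - 1)) * Froot m \<phi> F i (j - 1) * F (j - 1))
           + F (j - 1) * Froot m \<phi> F i (j - 1))"

text \<open>Defining relations of U_q(gl(m|n)), with the super brackets written out
  (the only odd generators are E m, F m).\<close>
definition uq_rels :: "nat \<Rightarrow> nat \<Rightarrow> (Cq \<Rightarrow> 'a::ring_1) \<Rightarrow> (nat \<Rightarrow> 'a) \<Rightarrow> (nat \<Rightarrow> 'a)
     \<Rightarrow> (nat \<Rightarrow> 'a) \<Rightarrow> (nat \<Rightarrow> 'a) \<Rightarrow> bool" where
  "uq_rels m n \<phi> K Kinv E F \<longleftrightarrow>
     scalar_hom \<phi> \<and>
     \<comment> \<open>K's commute and are invertible\<close>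
     (\<forall>i\<in>{1..m+n}. \<forall>j\<in>{1..m+n}.
        K i * K j = K j * K i \<and> K i * Kinv j = Kinv j * K i \<and> Kinv i * Kinv j = Kinv j * Kinv i) \<and>
     (\<forall>i\<in>{1..m+n}. K i * Kinv i = 1) \<and>
     \<comment> \<open>K E K^-1, K F K^-1\<close>
     (\<forall>i\<in>{1..m+n}. \<forall>j\<in>{1..<m+n}.
        K i * E j * Kinv i =
          \<phi> (qi m i powi ((if i = j then 1 else 0) - (if i = j + 1 then 1 else 0))) * E j \<and>
        K i * F j * Kinv i =
          \<phi> (qi m i powi (- ((if i = j then 1 else 0) - (if i = j + 1 then 1 else 0)))) * F j) \<and>
     \<comment> \<open>[E_i, F_j]\<close>
     (\<forall>i\<in>{1..<m+n}. \<forall>j\<in>{1..<m+n}.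
        E i * F j - (if i = m \<and> j = m then -1 else 1) * (F j * E i) =
          (if i = j then (K i * Kinv (i + 1) - Kinv i * K (i + 1))
                         * \<phi> (inverse (qi m i - inverse (qi m i))) else 0)) \<and>
     E m * E m = 0 \<and> F m * F m = 0 \<and>
     (\<forall>i\<in>{1..<m+n}. \<forall>j\<in>{1..<m+n}. (i + 1 < j \<or> j + 1 < i) \<longrightarrow>
        E i * E j = E j * E i \<and> F i * F j = F j * F i) \<and>
     \<comment> \<open>Serre relations\<close>
     (\<forall>i\<in>{1..<m+n}. \<forall>j\<in>{1..<m+n}. (i = j + 1 \<or> j = i + 1) \<and> i \<noteq> m \<longrightarrow>
        E i * E i * E j - \<phi> (qq + inverse qq) * (E i * E j * E i) + E j * E i * E i = 0 \<and>
        F i * F i * F j - \<phi> (qq + inverse qq) * (F i * F j * F i) + F j * F i * F i = 0) \<and>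
     \<comment> \<open>[E_{m-1,m+2}, E_{m,m+1}] = 0 (both odd, so anticommutator), when indices exist\<close>
     (2 \<le> m \<and> 2 \<le> n \<longrightarrow>
        Eroot m \<phi> E (m - 1) (m + 2) * E m + E m * Eroot m \<phi> E (m - 1) (m + 2) = 0 \<and>
        Froot m \<phi> F (m - 1) (m + 2) * F m + F m * Froot m \<phi> F (m - 1) (m + 2) = 0)"

definition I1 :: "nat \<Rightarrow> nat \<Rightarrow> (nat \<times> nat) set" where
  "I1 m n = {(i, j). 1 \<le> i \<and> i \<le> m \<and> m < j \<and> j \<le> m + n}"

definition prec :: "nat \<times> nat \<Rightarrow> nat \<times> nat \<Rightarrow> bool" where
  "prec p r \<longleftrightarrow> snd p > snd r \<or> (snd p = snd r \<and> fst p < fst r)"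

definition I1_list :: "nat \<Rightarrow> nat \<Rightarrow> (nat \<times> nat) list" where
  "I1_list m n = concat (map (\<lambda>j. map (\<lambda>i. (i, j)) [1..<m+1]) (rev [m+1..<m+n+1]))"

definition FI :: "nat \<Rightarrow> nat \<Rightarrow> (Cq \<Rightarrow> 'a::ring_1) \<Rightarrow> (nat \<Rightarrow> 'a) \<Rightarrow> (nat \<times> nat) set \<Rightarrow> 'a" where
  "FI m n \<phi> F I = prod_list (map (\<lambda>(i, j). Froot m \<phi> F i j) (filter (\<lambda>p. p \<in> I) (I1_list m n)))"

end

theory Submission
  imports Defs
begin


locale cen =
  fixes P Pi Ti :: "'a::ring_1"
  assumes PPi: "P * Pi = 1" and cP: "\<And>x. P * x = x * P" and cPi: "\<And>x. Pi * x = x * Pi"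
    and TTi: "(P + Pi) * Ti = 1" and cTi: "\<And>x. Ti * x = x * Ti"
begin
lemma PiP: "Pi * P = 1" using PPi cP by simp
lemma pullP: "x * (P * w) = P * (x * w)" by (metis cP mult.assoc)
lemma pullPi: "x * (Pi * w) = Pi * (x * w)" by (metis cPi mult.assoc)
lemma PPiw: "P * (Pi * w) = w" by (metis PPi mult.assoc mult_1)
lemma PiPw: "Pi * (P * w) = w" by (metis PiP mult.assoc mult_1)

lemma Tcancel: assumes "(P + Pi) * x = 0" shows "x = 0"
proof -
  have "x = Ti * ((P + Pi) * x)" using TTi cTi by (metis mult.assoc mult_1)
  with assms show ?thesis by simp
qed

definition ser :: "'a \<Rightarrow> 'a \<Rightarrow> 'a" where
  "ser y x = y*(y*x) - (P+Pi)*(y*(x*y)) + x*(y*y)"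

lemmas nrm = algebra_simps PPiw PiPw PPi PiP

lemma G2a_P: assumes EE: "E*E = 0" and S: "ser F E = 0"
  shows "(F*E - P*(E*F))*(F*E - P*(E*F)) = 0"
proof -
  have EEw: "E*(E*w) = 0" for w by (metis EE mult.assoc mult_zero_left)
  have "(P+Pi)*((F*E - P*(E*F))*(F*E - P*(E*F))) = - (ser F E * E) - P*(P*(E * ser F E))"
    by (simp add: ser_def nrm EEw EE pullP[of E] pullPi[of E] cP[of E, symmetric] cPi[of E, symmetric] pullP[of F] pullPi[of F] cP[of F, symmetric] cPi[of F, symmetric])
  then have "(P+Pi)*((F*E - P*(E*F))*(F*E - P*(E*F))) = 0" using S by simp
  then show ?thesis by (rule Tcancel)
qed

lemma G2a_Pi: assumes EE: "E*E = 0" and S: "ser F E = 0"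
  shows "(F*E - Pi*(E*F))*(F*E - Pi*(E*F)) = 0"
proof -
  have EEw: "E*(E*w) = 0" for w by (metis EE mult.assoc mult_zero_left)
  have "(P+Pi)*((F*E - Pi*(E*F))*(F*E - Pi*(E*F))) = - (ser F E * E) - Pi*(Pi*(E * ser F E))"
    by (simp add: ser_def nrm EEw EE pullP[of E] pullPi[of E] cP[of E, symmetric] cPi[of E, symmetric] pullP[of F] pullPi[of F] cP[of F, symmetric] cPi[of F, symmetric])
  then have "(P+Pi)*((F*E - Pi*(E*F))*(F*E - Pi*(E*F))) = 0" using S by simp
  then show ?thesis by (rule Tcancel)
qed

lemma G2a: assumes EE: "E*E = 0" and S: "ser F E = 0" and p: "p = P \<or> p = Pi"
  shows "(F*E - p*(E*F))*(F*E - p*(E*F)) = 0"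
  using p G2a_P[OF assms(1-2)] G2a_Pi[OF assms(1-2)] by blast

lemma G2b_P: assumes EE: "E*E = 0" and S: "ser F E = 0"
  shows "(E*F - P*(F*E))*(E*F - P*(F*E)) = 0"
proof -
  have EEw: "E*(E*w) = 0" for w by (metis EE mult.assoc mult_zero_left)
  have "(P+Pi)*((E*F - P*(F*E))*(E*F - P*(F*E))) = - (E * ser F E) - P*(P*(ser F E * E))"
    by (simp add: ser_def nrm EEw EE pullP[of E] pullPi[of E] cP[of E, symmetric] cPi[of E, symmetric] pullP[of F] pullPi[of F] cP[of F, symmetric] cPi[of F, symmetric])
  then have "(P+Pi)*((E*F - P*(F*E))*(E*F - P*(F*E))) = 0" using S by simp
  then show ?thesis by (rule Tcancel)
qed

lemma G2b_Pi: assumes EE: "E*E = 0" and S: "ser F E = 0"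
  shows "(E*F - Pi*(F*E))*(E*F - Pi*(F*E)) = 0"
proof -
  have EEw: "E*(E*w) = 0" for w by (metis EE mult.assoc mult_zero_left)
  have "(P+Pi)*((E*F - Pi*(F*E))*(E*F - Pi*(F*E))) = - (E * ser F E) - Pi*(Pi*(ser F E * E))"
    by (simp add: ser_def nrm EEw EE pullP[of E] pullPi[of E] cP[of E, symmetric] cPi[of E, symmetric] pullP[of F] pullPi[of F] cP[of F, symmetric] cPi[of F, symmetric])
  then have "(P+Pi)*((E*F - Pi*(F*E))*(E*F - Pi*(F*E))) = 0" using S by simp
  then show ?thesis by (rule Tcancel)
qed

lemma G2b: assumes EE: "E*E = 0" and S: "ser F E = 0" and p: "p = P \<or> p = Pi"
  shows "(E*F - p*(F*E))*(E*F - p*(F*E)) = 0"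
  using p G2b_P[OF assms(1-2)] G2b_Pi[OF assms(1-2)] by blast

lemma G3a_P: assumes S: "ser F E = 0" and FW: "F*W = W*F"
  shows "ser F (E*W - P*(W*E)) = 0"
proof -
  have FWw: "W*(F*w) = F*(W*w)" for w by (metis FW mult.assoc)
  have "ser F (E*W - P*(W*E)) = ser F E * W - P * (W * ser F E)"
    by (simp add: ser_def nrm FWw FW pullP[of E] pullPi[of E] cP[of E, symmetric] cPi[of E, symmetric] pullP[of F] pullPi[of F] cP[of F, symmetric] cPi[of F, symmetric] pullP[of W] pullPi[of W] cP[of W, symmetric] cPi[of W, symmetric])
  then show ?thesis using S by simp
qed

lemma G3a_Pi: assumes S: "ser F E = 0" and FW: "F*W = W*F"
  shows "ser F (E*W - Pi*(W*E)) = 0"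
proof -
  have FWw: "W*(F*w) = F*(W*w)" for w by (metis FW mult.assoc)
  have "ser F (E*W - Pi*(W*E)) = ser F E * W - Pi * (W * ser F E)"
    by (simp add: ser_def nrm FWw FW pullP[of E] pullPi[of E] cP[of E, symmetric] cPi[of E, symmetric] pullP[of F] pullPi[of F] cP[of F, symmetric] cPi[of F, symmetric] pullP[of W] pullPi[of W] cP[of W, symmetric] cPi[of W, symmetric])
  then show ?thesis using S by simp
qed

lemma G3a: assumes S: "ser F E = 0" and FW: "F*W = W*F" and p: "p = P \<or> p = Pi"
  shows "ser F (E*W - p*(W*E)) = 0"
  using p G3a_P[OF assms(1-2)] G3a_Pi[OF assms(1-2)] by blast

lemma G3b_P: assumes S: "ser F E = 0" and FW: "F*W = W*F"
  shows "ser F (W*E - P*(E*W)) = 0"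
proof -
  have FWw: "W*(F*w) = F*(W*w)" for w by (metis FW mult.assoc)
  have "ser F (W*E - P*(E*W)) = W * ser F E - P * (ser F E * W)"
    by (simp add: ser_def nrm FWw FW pullP[of E] pullPi[of E] cP[of E, symmetric] cPi[of E, symmetric] pullP[of F] pullPi[of F] cP[of F, symmetric] cPi[of F, symmetric] pullP[of W] pullPi[of W] cP[of W, symmetric] cPi[of W, symmetric])
  then show ?thesis using S by simp
qed

lemma G3b_Pi: assumes S: "ser F E = 0" and FW: "F*W = W*F"
  shows "ser F (W*E - Pi*(E*W)) = 0"
proof -
  have FWw: "W*(F*w) = F*(W*w)" for w by (metis FW mult.assoc)
  have "ser F (W*E - Pi*(E*W)) = W * ser F E - Pi * (ser F E * W)"
    by (simp add: ser_def nrm FWw FW pullP[of E] pullPi[of E] cP[of E, symmetric] cPi[of E, symmetric] pullP[of F] pullPi[of F] cP[of F, symmetric] cPi[of F, symmetric] pullP[of W] pullPi[of W] cP[of W, symmetric] cPi[of W, symmetric])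
  then show ?thesis using S by simp
qed

lemma G3b: assumes S: "ser F E = 0" and FW: "F*W = W*F" and p: "p = P \<or> p = Pi"
  shows "ser F (W*E - p*(E*W)) = 0"
  using p G3b_P[OF assms(1-2)] G3b_Pi[OF assms(1-2)] by blast

lemma G4_P: assumes xz: "x*z = z*x" and Sx: "ser y x = 0" and Sz: "ser y z = 0"
  shows "y * (z*(y*x - P*(x*y)) - P*((y*x - P*(x*y))*z)) = (z*(y*x - P*(x*y)) - P*((y*x - P*(x*y))*z)) * y"
proof -
  have xzw: "z*(x*w) = x*(z*w)" for w by (metis xz mult.assoc)
  define C where "C = x*z - z*x"
  have "(P+Pi)*(y * (z*(y*x - P*(x*y)) - P*((y*x - P*(x*y))*z)) - (z*(y*x - P*(x*y)) - P*((y*x - P*(x*y))*z)) * y)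
     = - (ser y z * x) + ser y x * z - P*(P*(z * ser y x)) + P*(P*(x * ser y z))
       - y*(y*C) - P*(P*(C*(y*y))) + P*((P+Pi)*(y*(C*y))) - P*((P+Pi)*(ser y x * z)) + P*((P+Pi)*(z*ser y x))"
    unfolding C_def by (simp add: ser_def nrm pullP[of x] pullPi[of x] cP[of x, symmetric] cPi[of x, symmetric] pullP[of y] pullPi[of y] cP[of y, symmetric] cPi[of y, symmetric] pullP[of z] pullPi[of z] cP[of z, symmetric] cPi[of z, symmetric])
  moreover have "C = 0" using xz C_def by simp
  ultimately have "(P+Pi)*(y * (z*(y*x - P*(x*y)) - P*((y*x - P*(x*y))*z)) - (z*(y*x - P*(x*y)) - P*((y*x - P*(x*y))*z)) * y) = 0"
    using Sx Sz by simp
  then have "y * (z*(y*x - P*(x*y)) - P*((y*x - P*(x*y))*z)) - (z*(y*x - P*(x*y)) - P*((y*x - P*(x*y))*z)) * y = 0"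
    by (rule Tcancel)
  then show ?thesis by simp
qed

lemma G4_Pi: assumes xz: "x*z = z*x" and Sx: "ser y x = 0" and Sz: "ser y z = 0"
  shows "y * (z*(y*x - Pi*(x*y)) - Pi*((y*x - Pi*(x*y))*z)) = (z*(y*x - Pi*(x*y)) - Pi*((y*x - Pi*(x*y))*z)) * y"
proof -
  have xzw: "z*(x*w) = x*(z*w)" for w by (metis xz mult.assoc)
  define C where "C = x*z - z*x"
  have "(P+Pi)*(y * (z*(y*x - Pi*(x*y)) - Pi*((y*x - Pi*(x*y))*z)) - (z*(y*x - Pi*(x*y)) - Pi*((y*x - Pi*(x*y))*z)) * y)
     = - (ser y z * x) + ser y x * z - Pi*(Pi*(z * ser y x)) + Pi*(Pi*(x * ser y z))
       - y*(y*C) - Pi*(Pi*(C*(y*y))) + Pi*((P+Pi)*(y*(C*y))) - Pi*((P+Pi)*(ser y x * z)) + Pi*((P+Pi)*(z*ser y x))"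
    unfolding C_def by (simp add: ser_def nrm pullP[of x] pullPi[of x] cP[of x, symmetric] cPi[of x, symmetric] pullP[of y] pullPi[of y] cP[of y, symmetric] cPi[of y, symmetric] pullP[of z] pullPi[of z] cP[of z, symmetric] cPi[of z, symmetric])
  moreover have "C = 0" using xz C_def by simp
  ultimately have "(P+Pi)*(y * (z*(y*x - Pi*(x*y)) - Pi*((y*x - Pi*(x*y))*z)) - (z*(y*x - Pi*(x*y)) - Pi*((y*x - Pi*(x*y))*z)) * y) = 0"
    using Sx Sz by simp
  then have "y * (z*(y*x - Pi*(x*y)) - Pi*((y*x - Pi*(x*y))*z)) - (z*(y*x - Pi*(x*y)) - Pi*((y*x - Pi*(x*y))*z)) * y = 0"
    by (rule Tcancel)
  then show ?thesis by simp
qed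

lemma G4: assumes xz: "x*z = z*x" and Sx: "ser y x = 0" and Sz: "ser y z = 0" and p: "p = P \<or> p = Pi"
  shows "y * (z*(y*x - p*(x*y)) - p*((y*x - p*(x*y))*z)) = (z*(y*x - p*(x*y)) - p*((y*x - p*(x*y))*z)) * y"
  using p G4_P[OF assms(1-3)] G4_Pi[OF assms(1-3)] by blast


lemma G5_P: assumes BB: "B*B = 0" and AC: "A*C = C*A"
  shows "(B*A - P*(A*B)) * (C*B - Pi*(B*C)) = - ((C*B - Pi*(B*C))*(B*A - P*(A*B)))
     - P*(((C*B - Pi*(B*C))*A - P*(A*(C*B - Pi*(B*C))))*B) - Pi*(B*((C*B - Pi*(B*C))*A - P*(A*(C*B - Pi*(B*C)))))"
proof -
  have BBw: "B*(B*w) = 0" for w by (metis BB mult.assoc mult_zero_left)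
  have ACw: "C*(A*w) = A*(C*w)" for w by (metis AC mult.assoc)
  show ?thesis by (simp add: nrm BBw BB ACw AC[symmetric] pullP[of A] pullPi[of A] cP[of A, symmetric] cPi[of A, symmetric]
     pullP[of B] pullPi[of B] cP[of B, symmetric] cPi[of B, symmetric] pullP[of C] pullPi[of C] cP[of C, symmetric] cPi[of C, symmetric])
qed
end

lemma cpull: fixes c :: "'a::ring_1" assumes "\<And>x. c*x = x*c" shows "x*(c*y) = c*(x*y)"
  by (metis assms mult.assoc)

lemma comm_pres: fixes f A B c :: "'a::ring_1"
  assumes fA: "f*A = A*f" and fB: "f*B = B*f" and c: "\<And>x. c*x = x*c"
  shows "f*(A*B - c*(B*A)) = (A*B - c*(B*A))*f"
proof -
  have fAw: "f*(A*w) = A*(f*w)" for w by (metis fA mult.assoc)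
  have fBw: "f*(B*w) = B*(f*w)" for w by (metis fB mult.assoc)
  show ?thesis by (simp add: algebra_simps fAw fBw fA fB cpull[OF c, of f] cpull[OF c, of A] cpull[OF c, of B] c[of f, symmetric])
qed

lemma split_step: fixes f A Y p r :: "'a::ring_1"
  assumes fA: "f*A = A*f" and p: "\<And>x. p*x = x*p" and r: "\<And>x. r*x = x*r"
  shows "f*(Y*A - p*(A*Y)) - r*((Y*A - p*(A*Y))*f) = (f*Y - r*(Y*f))*A - p*(A*(f*Y - r*(Y*f)))"
proof -
  have fAw: "A*(f*w) = f*(A*w)" for w by (metis fA mult.assoc)
  have rp: "r*(p*w) = p*(r*w)" for w by (metis r mult.assoc)
  show ?thesis by (simp add: algebra_simps fAw fA[symmetric] cpull[OF p, of f] cpull[OF p, of A] cpull[OF p, of Y] cpull[OF r, of f] cpull[OF r, of A] cpull[OF r, of Y] p[of f, symmetric] r[of f, symmetric] rp)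
qed

lemma antiL1: fixes f A Y p :: "'a::ring_1"
  assumes AY: "A*Y = -(Y*A)" and fY: "f*Y = Y*f" and p: "\<And>x. p*x = x*p"
  shows "(A*f - p*(f*A))*Y = -(Y*(A*f - p*(f*A)))"
proof -
  have AYw: "A*(Y*w) = -(Y*(A*w))" for w by (metis AY mult.assoc mult_minus_left)
  have fYw: "f*(Y*w) = Y*(f*w)" for w by (metis fY mult.assoc)
  show ?thesis by (simp add: algebra_simps AYw fYw AY fY cpull[OF p, of f] cpull[OF p, of A] cpull[OF p, of Y] p[of Y, symmetric])
qed

lemma antiL2: fixes f A Y p :: "'a::ring_1"
  assumes AY: "A*Y = -(Y*A)" and fY: "f*Y = Y*f" and p: "\<And>x. p*x = x*p"
  shows "(f*A - p*(A*f))*Y = -(Y*(f*A - p*(A*f)))"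
proof -
  have AYw: "A*(Y*w) = -(Y*(A*w))" for w by (metis AY mult.assoc mult_minus_left)
  have fYw: "f*(Y*w) = Y*(f*w)" for w by (metis fY mult.assoc)
  show ?thesis by (simp add: algebra_simps AYw fYw AY fY cpull[OF p, of f] cpull[OF p, of A] cpull[OF p, of Y] p[of Y, symmetric])
qed

lemma R1gen: fixes B A c :: "'a::ring_1"
  assumes BB: "B*B = 0" and c: "\<And>x. c*x = x*c"
  shows "B*(B*A - c*(A*B)) = -(c*((B*A - c*(A*B))*B))"
proof -
  have BBw: "B*(B*w) = 0" for w by (metis BB mult.assoc mult_zero_left)
  show ?thesis by (simp add: algebra_simps BBw BB cpull[OF c, of A] cpull[OF c, of B] c[of B, symmetric])
qed

lemma R2gen: fixes B A c :: "'a::ring_1"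
  assumes BB: "B*B = 0" and c: "\<And>x. c*x = x*c"
  shows "(A*B - c*(B*A))*B = -(c*(B*(A*B - c*(B*A))))"
proof -
  have BBw: "B*(B*w) = 0" for w by (metis BB mult.assoc mult_zero_left)
  show ?thesis by (simp add: algebra_simps BBw BB cpull[OF c, of A] cpull[OF c, of B] c[of B, symmetric])
qed




declare Froot.simps[simp del]

definition isM :: "Cq \<Rightarrow> bool" where "isM c \<longleftrightarrow> (\<exists>s z. s \<in> {1,-1} \<and> c = s * qq powi z)"

lemma qq_nz: "qq \<noteq> 0"
  by (simp add: qq_def Zero_fract_def eq_fract)

lemma T_nz: "qq + inverse qq \<noteq> 0"
proof -
  have "qq + inverse qq = Fract ([:0,1:] * [:0,1:] + 1) [:0,1:]"
    by (simp add: qq_def)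
  moreover have "[:0,1:] * [:0,1:] + 1 \<noteq> (0::complex poly)"
  proof
    assume "[:0,1:] * [:0,1:] + 1 = (0::complex poly)"
    then have "poly ([:0,1:] * [:0,1:] + 1) 0 = (0::complex)" by simp
    then show False by simp
  qed
  ultimately show ?thesis by (simp add: Zero_fract_def eq_fract)
qed

lemma isM_1: "isM 1" unfolding isM_def by (rule exI[of _ 1], rule exI[of _ 0]) simp
lemma isM_neg: assumes "isM c" shows "isM (-c)"
proof -
  obtain s z where s: "s \<in> {1,-1}" "c = s * qq powi z" using assms isM_def by blast
  have "-c = (-s) * qq powi z" using s by simp
  moreover have "-s \<in> {1,-1}" using s by auto
  ultimately show ?thesis unfolding isM_def by blast
qed
lemma isM_mult: assumes "isM a" "isM b" shows "isM (a*b)"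
proof -
  obtain s z where s: "s \<in> {1,-1}" "a = s * qq powi z" using assms(1) isM_def by blast
  obtain t w where t: "t \<in> {1,-1}" "b = t * qq powi w" using assms(2) isM_def by blast
  have "a*b = (s*t) * qq powi (z+w)" using s t qq_nz by (simp add: power_int_add algebra_simps)
  moreover have "s*t \<in> {1,-1}" using s t by auto
  ultimately show ?thesis unfolding isM_def by blast
qed
lemma isM_qq: "isM qq" unfolding isM_def by (rule exI[of _ 1], rule exI[of _ 1]) simp
lemma isM_qqi: "isM (inverse qq)" unfolding isM_def by (rule exI[of _ 1], rule exI[of _ "-1"]) simp

locale uqloc =
  fixes m n :: nat and \<phi> :: "Cq \<Rightarrow> 'a::ring_1" and K Kinv E F :: "nat \<Rightarrow> 'a"
  assumes m1: "1 \<le> m" and n1: "1 \<le> n" and rel: "uq_rels m n \<phi> K Kinv E F"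
begin

lemma hom: "scalar_hom \<phi>" using rel unfolding uq_rels_def by (elim conjE) assumption
lemma phi1: "\<phi> 1 = 1" using hom scalar_hom_def by blast
lemma phi_add: "\<phi> (a + b) = \<phi> a + \<phi> b" using hom scalar_hom_def by blast
lemma phi_mult: "\<phi> (a * b) = \<phi> a * \<phi> b" using hom scalar_hom_def by blast
lemma phi_cen: "\<phi> a * x = x * \<phi> a" using hom scalar_hom_def by blast
lemma phi0: "\<phi> 0 = 0" using phi_add[of 0 0] by simp
lemma phi_neg: "\<phi> (-a) = - \<phi> a" using phi_add[of a "-a"] phi0 by (simp add: eq_neg_iff_add_eq_0 add.commute)
lemma phi_m1: "\<phi> (-1) = -1" using phi_neg phi1 by simp

end

sublocale uqloc \<subseteq> cen "\<phi> qq" "\<phi> (inverse qq)" "\<phi> (inverse (qq + inverse qq))"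
proof
  show "\<phi> qq * \<phi> (inverse qq) = 1" using qq_nz by (simp add: phi_mult[symmetric] phi1)
  show "(\<phi> qq + \<phi> (inverse qq)) * \<phi> (inverse (qq + inverse qq)) = 1"
    using T_nz by (simp add: phi_mult[symmetric] phi_add[symmetric] phi1)
qed (simp_all add: phi_cen)

context uqloc begin

abbreviation X where "X a b \<equiv> Froot m \<phi> F a b"

lemma pp_cen: "\<phi> c * x = x * \<phi> c" by (rule phi_cen)
lemma pp_cases: "\<phi> (qi m k) = \<phi> qq \<or> \<phi> (qi m k) = \<phi> (inverse qq)" by (simp add: qi_def)
lemma pp_low: "k \<le> m \<Longrightarrow> \<phi> (qi m k) = \<phi> qq" by (simp add: qi_def)
lemma pp_high: "m < k \<Longrightarrow> \<phi> (qi m k) = \<phi> (inverse qq)" by (simp add: qi_def)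

lemma commF: "1 \<le> i \<Longrightarrow> i < m+n \<Longrightarrow> 1 \<le> j \<Longrightarrow> j < m+n \<Longrightarrow> i+1 < j \<or> j+1 < i \<Longrightarrow> F i * F j = F j * F i"
proof -
  have "\<forall>i\<in>{1..<m+n}. \<forall>j\<in>{1..<m+n}. (i + 1 < j \<or> j + 1 < i) \<longrightarrow>
        E i * E j = E j * E i \<and> F i * F j = F j * F i" using rel unfolding uq_rels_def by (elim conjE) assumption
  then show "1 \<le> i \<Longrightarrow> i < m+n \<Longrightarrow> 1 \<le> j \<Longrightarrow> j < m+n \<Longrightarrow> i+1 < j \<or> j+1 < i \<Longrightarrow> F i * F j = F j * F i"
    by auto
qed

lemma Fmm: "F m * F m = 0" using rel unfolding uq_rels_def by (elim conjE) assumption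

lemma serreF: assumes "1 \<le> i" "i < m+n" "1 \<le> j" "j < m+n" "i = j+1 \<or> j = i+1" "i \<noteq> m"
  shows "ser (F i) (F j) = 0"
proof -
  have "\<forall>i\<in>{1..<m+n}. \<forall>j\<in>{1..<m+n}. (i = j + 1 \<or> j = i + 1) \<and> i \<noteq> m \<longrightarrow>
        E i * E i * E j - \<phi> (qq + inverse qq) * (E i * E j * E i) + E j * E i * E i = 0 \<and>
        F i * F i * F j - \<phi> (qq + inverse qq) * (F i * F j * F i) + F j * F i * F i = 0"
    using rel unfolding uq_rels_def by (elim conjE) assumption
  then have "F i * F i * F j - \<phi> (qq + inverse qq) * (F i * F j * F i) + F j * F i * F i = 0"
    using assms by auto
  then show ?thesis by (simp add: ser_def phi_add mult.assoc)
qed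

lemma quart: assumes "2 \<le> m" "2 \<le> n" shows "X (m-1) (m+2) * F m + F m * X (m-1) (m+2) = 0"
proof -
  have "2 \<le> m \<and> 2 \<le> n \<longrightarrow>
        Eroot m \<phi> E (m - 1) (m + 2) * E m + E m * Eroot m \<phi> E (m - 1) (m + 2) = 0 \<and>
        Froot m \<phi> F (m - 1) (m + 2) * F m + F m * Froot m \<phi> F (m - 1) (m + 2) = 0"
    using rel unfolding uq_rels_def by (elim conjE) assumption
  then show ?thesis using assms by blast
qed

lemma X_base: "X a (Suc a) = F a"
  using Froot.simps[of m \<phi> F a "Suc a"] by simp

lemma X_step: "a < b \<Longrightarrow> X a (Suc b) = F b * X a b - \<phi> (qi m b) * (X a b * F b)"
  using Froot.simps[of m \<phi> F a "Suc b"] by (simp add: algebra_simps)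

lemma XfarF: "1 \<le> a \<Longrightarrow> a < b \<Longrightarrow> b \<le> m+n \<Longrightarrow> 1 \<le> k \<Longrightarrow> k < m+n \<Longrightarrow> b+1 \<le> k \<or> k+2 \<le> a
   \<Longrightarrow> F k * X a b = X a b * F k"
proof (induction b)
  case 0 then show ?case by simp
next
  case (Suc b)
  show ?case
  proof (cases "b = a")
    case True
    have "F k * F a = F a * F k" by (rule commF) (use Suc.prems True in auto)
    then show ?thesis using True by (simp add: X_base)
  next
    case False
    then have ab: "a < b" using Suc.prems by simp
    have h1: "F k * F b = F b * F k" using Suc.prems ab by (intro commF) auto
    have h2: "F k * X a b = X a b * F k" using Suc.prems ab by (intro Suc.IH) auto
    show ?thesis using ab comm_pres[OF h1 h2 pp_cen] by (simp only: X_step)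
  qed
qed

lemma XXfar: "1 \<le> a \<Longrightarrow> a < b \<Longrightarrow> b+1 \<le> c \<Longrightarrow> c < d \<Longrightarrow> d \<le> m+n \<Longrightarrow> X a b * X c d = X c d * X a b"
proof (induction d)
  case 0 then show ?case by simp
next
  case (Suc d)
  show ?case
  proof (cases "d = c")
    case True
    then show ?thesis using Suc.prems by (simp add: X_base XfarF[symmetric])
  next
    case False
    then have cd: "c < d" using Suc.prems by simp
    have h1: "X a b * F d = F d * X a b" using Suc.prems cd by (intro XfarF[symmetric]) auto
    have h2: "X a b * X c d = X c d * X a b" using Suc.prems cd by (intro Suc.IH) auto
    show ?thesis using cd comm_pres[OF h1 h2 pp_cen] by (simp only: X_step)
  qed
qed

lemma Xsplit: "1 \<le> a \<Longrightarrow> a < c \<Longrightarrow> c < b \<Longrightarrow> b \<le> m+n \<Longrightarrow> X a b = X c b * X a c - \<phi> (qi m c) * (X a c * X c b)"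
proof (induction b)
  case 0 then show ?case by simp
next
  case (Suc b)
  show ?case
  proof (cases "b = c")
    case True
    then show ?thesis using Suc.prems by (simp add: X_base X_step)
  next
    case False
    then have cb: "c < b" using Suc.prems by simp
    have fA: "F b * X a c = X a c * F b" using Suc.prems cb by (intro XfarF) auto
    have "X a (Suc b) = F b * X a b - \<phi> (qi m b) * (X a b * F b)" using Suc.prems cb by (simp add: X_step)
    also have "\<dots> = F b * (X c b * X a c - \<phi> (qi m c) * (X a c * X c b))
         - \<phi> (qi m b) * ((X c b * X a c - \<phi> (qi m c) * (X a c * X c b)) * F b)"
      using Suc.prems cb by (simp add: Suc.IH)
    also have "\<dots> = (F b * X c b - \<phi> (qi m b) * (X c b * F b)) * X a c - \<phi> (qi m c) * (X a c * (F b * X c b - \<phi> (qi m b) * (X c b * F b)))"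
      by (rule split_step[OF fA pp_cen pp_cen])
    finally show ?thesis using cb by (simp add: X_step)
  qed
qed

end


context uqloc begin

lemma SerR: assumes "1 \<le> a" "a < k" "k < m+n" "k \<noteq> m" shows "ser (F k) (X a k) = 0"
proof (cases "k = Suc a")
  case True
  then show ?thesis using assms by (simp add: X_base serreF)
next
  case False
  then have ak: "a < k - 1" using assms by simp
  have e: "X a k = F (k-1) * X a (k-1) - \<phi> (qi m (k-1)) * (X a (k-1) * F (k-1))"
    using X_step[OF ak] ak by simp
  have S: "ser (F k) (F (k-1)) = 0" using assms ak by (intro serreF) auto
  have FW: "F k * X a (k-1) = X a (k-1) * F k" using assms ak by (intro XfarF) auto
  show ?thesis unfolding e by (rule G3a[OF S FW pp_cases])
qed

lemma SerL: "1 \<le> k \<Longrightarrow> k \<noteq> m \<Longrightarrow> k+1 < b \<Longrightarrow> b \<le> m+n \<Longrightarrow> ser (F k) (X (k+1) b) = 0"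
proof (induction b)
  case 0 then show ?case by simp
next
  case (Suc b)
  show ?case
  proof (cases "b = k+1")
    case True
    then show ?thesis using Suc.prems by (simp add: X_base serreF)
  next
    case False
    then have kb: "k+1 < b" using Suc.prems by simp
    have S: "ser (F k) (X (k+1) b) = 0" using Suc.prems kb by (intro Suc.IH) auto
    have FW: "F k * F b = F b * F k" using Suc.prems kb by (intro commF) auto
    show ?thesis using kb G3b[OF S FW pp_cases] by (simp only: X_step)
  qed
qed

lemma sqz_m: "m < b \<Longrightarrow> b \<le> m+n \<Longrightarrow> X m b * X m b = 0"
proof (induction b)
  case 0 then show ?case by simp
next
  case (Suc b)
  show ?case
  proof (cases "b = m")
    case True
    then show ?thesis by (simp add: X_base Fmm)
  next
    case False
    then have mb: "m < b" using Suc.prems by simp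
    have EE: "X m b * X m b = 0" using Suc.prems mb by (intro Suc.IH) auto
    have S: "ser (F b) (X m b) = 0" using Suc.prems mb m1 by (intro SerR) auto
    show ?thesis using mb G2a[OF EE S pp_cases] by (simp only: X_step)
  qed
qed

lemma sqz: assumes "1 \<le> a" "a \<le> m" "m < b" "b \<le> m+n" shows "X a b * X a b = 0"
  using assms
proof (induction "m - a" arbitrary: a)
  case 0
  then have "a = m" by simp
  then show ?case using sqz_m 0 by simp
next
  case (Suc d)
  then have am: "a < m" by simp
  have sp: "X a b = X (a+1) b * F a - \<phi> (qi m (a+1)) * (F a * X (a+1) b)"
    using Xsplit[of a "a+1" b] Suc.prems am by (simp add: X_base)
  have EE: "X (a+1) b * X (a+1) b = 0" using Suc am by (intro Suc.hyps) auto
  have S: "ser (F a) (X (a+1) b) = 0" using Suc.prems am by (intro SerL) auto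
  show ?case unfolding sp by (rule G2b[OF EE S pp_cases])
qed

lemma H3: assumes "2 \<le> k" "k+2 \<le> m+n" "k \<noteq> m"
  shows "F k * X (k-1) (k+2) = X (k-1) (k+2) * F k"
proof -
  have pk: "\<phi> (qi m (k+1)) = \<phi> (qi m k)" using assms by (simp add: qi_def)
  have W: "X (k-1) (k+1) = F k * F (k-1) - \<phi> (qi m k) * (F (k-1) * F k)"
    using X_step[of "k-1" k] X_base[of "k-1"] assms by simp
  have Y: "X (k-1) (k+2) = F (k+1) * X (k-1) (k+1) - \<phi> (qi m (k+1)) * (X (k-1) (k+1) * F (k+1))"
    using X_step[of "k-1" "k+1"] assms by simp
  have xz: "F (k-1) * F (k+1) = F (k+1) * F (k-1)" using assms by (intro commF) auto
  have Sx: "ser (F k) (F (k-1)) = 0" using assms by (intro serreF) auto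
  have Sz: "ser (F k) (F (k+1)) = 0" using assms by (intro serreF) auto
  show ?thesis unfolding Y W pk by (rule G4[OF xz Sx Sz pp_cases])
qed

lemma L4: assumes "k \<noteq> m" "1 \<le> a" "a < k" "k+2 \<le> b" "b \<le> m+n"
  shows "F k * X a b = X a b * F k"
  using assms
proof (induction b)
  case 0 then show ?case by simp
next
  case (Suc b)
  show ?case
  proof (cases "Suc b = k+2")
    case True
    show ?thesis
    proof (cases "a = k - 1")
      case True
      then show ?thesis using H3[of k] Suc.prems \<open>Suc b = k+2\<close> by simp
    next
      case False
      then have ak: "a < k-1" using Suc.prems by simp
      have sp: "X a (k+2) = X (k-1) (k+2) * X a (k-1) - \<phi> (qi m (k-1)) * (X a (k-1) * X (k-1) (k+2))"
        using Xsplit[of a "k-1" "k+2"] Suc.prems ak \<open>Suc b = k+2\<close> by simp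
      have h1: "F k * X (k-1) (k+2) = X (k-1) (k+2) * F k" using Suc.prems \<open>Suc b = k+2\<close> ak by (intro H3) auto
      have h2: "F k * X a (k-1) = X a (k-1) * F k" using Suc.prems \<open>Suc b = k+2\<close> ak by (intro XfarF) auto
      show ?thesis using comm_pres[OF h1 h2 pp_cen] \<open>Suc b = k+2\<close> sp by simp
    qed
  next
    case False
    then have kb: "k+2 \<le> b" using Suc.prems by simp
    have h1: "F k * F b = F b * F k" using Suc.prems kb by (intro commF) auto
    have h2: "F k * X a b = X a b * F k" using Suc.prems kb by (intro Suc.IH) auto
    have ab: "a < b" using Suc.prems kb by simp
    show ?thesis using ab comm_pres[OF h1 h2 pp_cen] by (simp only: X_step)
  qed
qed

end


context uqloc begin

lemma anti_sym: "x*y = -(y*x) \<Longrightarrow> y*x = -(x*(y::'a))" by simp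

lemma R3: assumes "1 \<le> a" "a < b" "b \<le> m" "m < c" "c < d" "d \<le> m+n"
  shows "X b c * X a d = -(X a d * X b c)"
  using assms
proof (induction "c - b" arbitrary: a b c d rule: less_induct)
  case less
  have adj: "X b c * X (b-1) (c+1) = -(X (b-1) (c+1) * X b c)"
  proof -
    consider "b < m" | "b = m" "c > m+1" | "b = m" "c = m+1" using less.prems by linarith
    then show ?thesis
    proof cases
      case 1
      have sp: "X b c = X (b+1) c * F b - \<phi> (qi m (b+1)) * (F b * X (b+1) c)"
        using Xsplit[of b "b+1" c] less.prems 1 by (simp add: X_base)
      have IH: "X (b+1) c * X (b-1) (c+1) = -(X (b-1) (c+1) * X (b+1) c)"
        using less.prems 1 by (intro less.hyps) auto
      have fY: "F b * X (b-1) (c+1) = X (b-1) (c+1) * F b"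
        using less.prems 1 by (intro L4) auto
      show ?thesis unfolding sp by (rule antiL1[OF IH fY pp_cen])
    next
      case 2
      have sp: "X b c = F (c-1) * X m (c-1) - \<phi> (qi m (c-1)) * (X m (c-1) * F (c-1))"
        using X_step[of m "c-1"] 2 by simp
      have IH: "X m (c-1) * X (m-1) (c+1) = -(X (m-1) (c+1) * X m (c-1))"
        using less.prems 2 by (intro less.hyps) auto
      have fY: "F (c-1) * X (m-1) (c+1) = X (m-1) (c+1) * F (c-1)"
        using less.prems 2 by (intro L4) auto
      show ?thesis unfolding sp using antiL2[OF IH fY pp_cen] 2 by simp
    next
      case 3
      have m2: "2 \<le> m" "2 \<le> n" using less.prems 3 by auto
      have "X b c = F m" using 3 by (simp add: X_base)
      moreover have "b - 1 = m - 1" "c + 1 = m + 2" using 3 by auto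
      ultimately show ?thesis using quart[OF m2] by (simp add: eq_neg_iff_add_eq_0 add.commute)
    qed
  qed
  have dgen: "X b c * X (b-1) d' = -(X (b-1) d' * X b c)" if "c < d'" "d' \<le> m+n" for d'
    using that
  proof (induction d')
    case 0 then show ?case by simp
  next
    case (Suc d')
    show ?case
    proof (cases "d' = c")
      case True then show ?thesis using adj by simp
    next
      case False
      then have cd: "c < d'" using Suc.prems by simp
      have IH: "X (b-1) d' * X b c = -(X b c * X (b-1) d')"
        by (rule anti_sym, rule Suc.IH) (use Suc.prems cd in auto)
      have fB: "F d' * X b c = X b c * F d'" using Suc.prems cd less.prems by (intro XfarF) auto
      have bd: "b - 1 < d'" using cd less.prems by simp
      show ?thesis using anti_sym[OF antiL2[OF IH fB pp_cen]] bd by (simp only: X_step)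
    qed
  qed
  have agen: "X b c * X a' d = -(X a' d * X b c)" if "1 \<le> a'" "a' < b" for a'
    using that
  proof (induction "b - 1 - a'" arbitrary: a')
    case 0
    then have "a' = b - 1" by simp
    then show ?case using dgen less.prems by simp
  next
    case (Suc k)
    then have ab: "a' + 1 < b" by simp
    have sp: "X a' d = X (a'+1) d * F a' - \<phi> (qi m (a'+1)) * (F a' * X (a'+1) d)"
      using Xsplit[of a' "a'+1" d] Suc.prems ab less.prems by (simp add: X_base)
    have IH: "X (a'+1) d * X b c = -(X b c * X (a'+1) d)"
      by (rule anti_sym, rule Suc.hyps) (use Suc ab in auto)
    have fB: "F a' * X b c = X b c * F a'" using Suc.prems ab less.prems by (intro XfarF) auto
    show ?case unfolding sp by (rule anti_sym[OF antiL1[OF IH fB pp_cen]])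
  qed
  show ?case using agen less.prems by simp
qed

lemma R1: assumes "1 \<le> a" "a < b" "b \<le> m" "m < j" "j \<le> m+n"
  shows "X b j * X a j = -(\<phi> qq * (X a j * X b j))"
proof -
  have sp: "X a j = X b j * X a b - \<phi> qq * (X a b * X b j)"
    using Xsplit[of a b j] assms pp_low[of b] by simp
  have BB: "X b j * X b j = 0" using assms by (intro sqz) auto
  show ?thesis unfolding sp by (rule R1gen[OF BB phi_cen])
qed

lemma R2: assumes "1 \<le> i" "i \<le> m" "m < j" "j < t" "t \<le> m+n"
  shows "X i t * X i j = -(\<phi> (inverse qq) * (X i j * X i t))"
proof -
  have sp: "X i t = X j t * X i j - \<phi> (inverse qq) * (X i j * X j t)"
    using Xsplit[of i j t] assms pp_high[of j] by simp
  have BB: "X i j * X i j = 0" using assms by (intro sqz) auto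
  show ?thesis unfolding sp by (rule R2gen[OF BB phi_cen])
qed

lemma R4: assumes "1 \<le> a" "a < b" "b \<le> m" "m < c" "c < d" "d \<le> m+n"
  shows "X a c * X b d = -(X b d * X a c) + (\<phi> (inverse qq) - \<phi> qq) * (X a d * X b c)"
proof -
  have spac: "X a c = X b c * X a b - \<phi> qq * (X a b * X b c)"
    using Xsplit[of a b c] assms pp_low[of b] by simp
  have spbd: "X b d = X c d * X b c - \<phi> (inverse qq) * (X b c * X c d)"
    using Xsplit[of b c d] assms pp_high[of c] by simp
  have spad: "X a d = X b d * X a b - \<phi> qq * (X a b * X b d)"
    using Xsplit[of a b d] assms pp_low[of b] by simp
  have BB: "X b c * X b c = 0" using assms by (intro sqz) auto
  have AC: "X a b * X c d = X c d * X a b" using assms by (intro XXfar) auto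
  have g: "X a c * X b d = -(X b d * X a c) - \<phi> qq * (X a d * X b c) - \<phi> (inverse qq) * (X b c * X a d)"
    unfolding spad spbd spac by (rule G5_P[OF BB AC])
  have r3: "X b c * X a d = -(X a d * X b c)" using assms by (rule R3)
  show ?thesis using g r3 by (simp add: algebra_simps)
qed

end


context uqloc begin

definition QC :: "'a \<Rightarrow> 'a \<Rightarrow> bool" where "QC x y \<longleftrightarrow> (\<exists>c. isM c \<and> x*y = \<phi> c * (y*x))"

lemma QC_1r: "QC x 1" unfolding QC_def using isM_1 phi1 by force
lemma QC_1l: "QC 1 x" unfolding QC_def using isM_1 phi1 by force

lemma QC_mult_r: assumes "QC x y" "QC x z" shows "QC x (y*z)"
proof -
  obtain c where c: "isM c" "x*y = \<phi> c * (y*x)" using assms(1) QC_def by blast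
  obtain d where d: "isM d" "x*z = \<phi> d * (z*x)" using assms(2) QC_def by blast
  have "x*(y*z) = (x*y)*z" by (simp add: mult.assoc)
  also have "\<dots> = \<phi> c * (y*(x*z))" using c by (simp add: mult.assoc)
  also have "\<dots> = \<phi> c * (y*(\<phi> d * (z*x)))" using d by simp
  also have "\<dots> = \<phi> (c*d) * ((y*z)*x)" by (simp add: phi_mult mult.assoc cpull[OF phi_cen, of y])
  finally show ?thesis unfolding QC_def using isM_mult[OF c(1) d(1)] by blast
qed

lemma QC_mult_l: assumes "QC y x" "QC z x" shows "QC (y*z) x"
proof -
  obtain c where c: "isM c" "y*x = \<phi> c * (x*y)" using assms(1) QC_def by blast
  obtain d where d: "isM d" "z*x = \<phi> d * (x*z)" using assms(2) QC_def by blast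
  have "(y*z)*x = y*(z*x)" by (simp add: mult.assoc)
  also have "\<dots> = y*(\<phi> d * (x*z))" using d by simp
  also have "\<dots> = \<phi> d * ((y*x)*z)" by (simp add: mult.assoc cpull[OF phi_cen, of y])
  also have "\<dots> = \<phi> d * (\<phi> c * (x*y) * z)" using c by simp
  also have "\<dots> = \<phi> (d*c) * (x*(y*z))" by (simp add: phi_mult mult.assoc)
  finally show ?thesis unfolding QC_def using isM_mult[OF d(1) c(1)] by blast
qed

lemma QC_prod_r: "(\<And>y. y \<in> set ys \<Longrightarrow> QC x y) \<Longrightarrow> QC x (prod_list ys)"
  by (induction ys) (auto simp: QC_1r QC_mult_r)

lemma QC_prod_l: "(\<And>y. y \<in> set ys \<Longrightarrow> QC y x) \<Longrightarrow> QC (prod_list ys) x"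
  by (induction ys) (auto simp: QC_1l QC_mult_l)

lemma QC_neg: "x*y = -(y*x) \<Longrightarrow> QC x y"
  unfolding QC_def using isM_neg[OF isM_1] phi_m1 by force

lemma QC_negq: "x*y = -(\<phi> qq * (y*x)) \<Longrightarrow> QC x y"
  unfolding QC_def using isM_neg[OF isM_qq] phi_neg by force

lemma flip: "x*y = -(\<phi> (inverse qq) * (y*x)) \<Longrightarrow> y*x = -(\<phi> qq * (x*y))"
  by (simp add: PPiw)

definition colP where "colP t k = prod_list (map (\<lambda>s. X s t) [1..<Suc k])"
definition colQ where "colQ t k = prod_list (map (\<lambda>s. X s t) [k..<Suc m])"

lemma colP_0: "colP t 0 = 1" by (simp add: colP_def)
lemma colP_Suc: "colP t (Suc k) = colP t k * X (Suc k) t" by (simp add: colP_def)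
lemma colQ_end: "colQ t (Suc m) = 1" by (simp add: colQ_def)
lemma colQ_cons: "k \<le> m \<Longrightarrow> colQ t k = X k t * colQ t (Suc k)" by (simp add: colQ_def upt_conv_Cons del: upt_Suc)
lemma colQ_1: "colQ t 1 = colP t m" by (simp add: colQ_def colP_def)

lemma ZL1: "1 \<le> i \<Longrightarrow> i \<le> k \<Longrightarrow> k \<le> m \<Longrightarrow> m < t \<Longrightarrow> t \<le> m+n \<Longrightarrow> colP t k * X i t = 0"
proof (induction k)
  case 0 then show ?case by simp
next
  case (Suc k)
  show ?case
  proof (cases "Suc k = i")
    case True
    have hsq: "X i t * X i t = 0" using Suc.prems by (intro sqz) auto
    from True have "i = Suc k" by simp
    then show ?thesis using hsq by (simp add: colP_Suc mult.assoc)
  next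
    case False
    then have ik: "i \<le> k" using Suc.prems by simp
    have r: "X (Suc k) t * X i t = -(\<phi> qq * (X i t * X (Suc k) t))" using Suc.prems ik by (intro R1) auto
    have z: "colP t k * X i t = 0" using Suc.prems ik by (intro Suc.IH) auto
    have "colP t (Suc k) * X i t = colP t k * (X (Suc k) t * X i t)" by (simp add: colP_Suc mult.assoc)
    also have "\<dots> = -(\<phi> qq * ((colP t k * X i t) * X (Suc k) t))" by (simp add: r pullP mult.assoc)
    finally show ?thesis using z by simp
  qed
qed

lemma ZL2: assumes "1 \<le> k" "k \<le> i" "i \<le> m" "m < t" "t \<le> m+n" shows "X i t * colQ t k = 0"
  using assms
proof (induction "i - k" arbitrary: k)
  case 0
  then have ki: "k = i" by simp
  have "X i t * X i t = 0" using 0 by (intro sqz) auto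
  then show ?case using ki 0 by (simp add: colQ_cons mult.assoc[symmetric])
next
  case (Suc d)
  then have ki: "k < i" by simp
  have r: "X i t * X k t = -(\<phi> qq * (X k t * X i t))" using Suc.prems ki by (intro R1) auto
  have z: "X i t * colQ t (Suc k) = 0" using Suc ki by (intro Suc.hyps) auto
  have "X i t * colQ t k = (X i t * X k t) * colQ t (Suc k)" using Suc.prems ki by (simp add: colQ_cons mult.assoc)
  also have "\<dots> = -(\<phi> qq * (X k t * (X i t * colQ t (Suc k))))" by (simp add: r mult.assoc)
  finally show ?case using z by simp
qed

lemma Col1: "1 \<le> i \<Longrightarrow> i \<le> m \<Longrightarrow> m < j \<Longrightarrow> j < t \<Longrightarrow> t \<le> m+n \<Longrightarrow> k \<le> m \<Longrightarrow> QC (X i j) (colP t k)"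
proof (induction k)
  case 0 then show ?case by (simp add: colP_0 QC_1r)
next
  case (Suc k)
  let ?s = "Suc k"
  have IH: "QC (X i j) (colP t k)" using Suc.prems by (intro Suc.IH) auto
  obtain c where c: "isM c" "X i j * colP t k = \<phi> c * (colP t k * X i j)"
    using IH unfolding QC_def by blast
  have key: "\<exists>e. isM e \<and> colP t k * (X i j * X ?s t) = \<phi> e * (colP t k * (X ?s t * X i j))"
  proof -
    consider "?s < i" | "?s = i" | "i < ?s" by linarith
    then show ?thesis
    proof cases
      case 1
      have r: "X i j * X ?s t = -(X ?s t * X i j)" using Suc.prems 1 by (intro R3) auto
      show ?thesis using isM_neg[OF isM_1] by (intro exI[of _ "-1"]) (simp add: r phi_m1)
    next
      case 2
      have r: "X i t * X i j = -(\<phi> (inverse qq) * (X i j * X i t))" using Suc.prems by (intro R2) auto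
      have r2: "X i j * X ?s t = -(\<phi> qq * (X ?s t * X i j))" using flip[OF r] 2 by simp
      show ?thesis using isM_neg[OF isM_qq] by (intro exI[of _ "-qq"]) (simp add: r2 phi_neg pullP)
    next
      case 3
      have r: "X i j * X ?s t = -(X ?s t * X i j) + (\<phi> (inverse qq) - \<phi> qq) * (X i t * X ?s j)"
        using Suc.prems 3 by (intro R4) auto
      have z: "colP t k * X i t = 0" using Suc.prems 3 by (intro ZL1) auto
      have "colP t k * (X i j * X ?s t) = -(colP t k * (X ?s t * X i j)) + (\<phi> (inverse qq) - \<phi> qq) * ((colP t k * X i t) * X ?s j)"
        by (simp add: r algebra_simps cpull[OF phi_cen, of "colP t k"])
      then have "colP t k * (X i j * X ?s t) = \<phi> (-1) * (colP t k * (X ?s t * X i j))"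
        using z by (simp add: phi_m1)
      then show ?thesis using isM_neg[OF isM_1] by blast
    qed
  qed
  then obtain e where e: "isM e" "colP t k * (X i j * X ?s t) = \<phi> e * (colP t k * (X ?s t * X i j))" by blast
  have "X i j * colP t ?s = (X i j * colP t k) * X ?s t" by (simp add: colP_Suc mult.assoc)
  also have "\<dots> = \<phi> c * (colP t k * (X i j * X ?s t))" using c by (simp add: mult.assoc)
  also have "\<dots> = \<phi> c * (\<phi> e * (colP t k * (X ?s t * X i j)))" using e by simp
  also have "\<dots> = \<phi> (c*e) * (colP t ?s * X i j)" by (simp add: phi_mult colP_Suc mult.assoc)
  finally show ?case unfolding QC_def using isM_mult[OF c(1) e(1)] by blast
qed

lemma Col2: assumes "1 \<le> i" "i \<le> m" "m < t" "t < j" "j \<le> m+n" "1 \<le> k" "k \<le> Suc m"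
  shows "QC (colQ t k) (X i j)"
  using assms
proof (induction "Suc m - k" arbitrary: k)
  case 0
  then have "k = Suc m" by simp
  then show ?case by (simp add: colQ_end QC_1l)
next
  case (Suc d)
  then have km: "k \<le> m" by simp
  have IH: "QC (colQ t (Suc k)) (X i j)" using Suc km by (intro Suc.hyps(1)) auto
  obtain c where c: "isM c" "colQ t (Suc k) * X i j = \<phi> c * (X i j * colQ t (Suc k))"
    using IH unfolding QC_def by blast
  have key: "\<exists>e. isM e \<and> (X k t * X i j) * colQ t (Suc k) = \<phi> e * ((X i j * X k t) * colQ t (Suc k))"
  proof -
    consider "i < k" | "k = i" | "k < i" by linarith
    then show ?thesis
    proof cases
      case 1
      have r: "X k t * X i j = -(X i j * X k t)" using Suc.prems 1 km by (intro R3) auto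
      show ?thesis using isM_neg[OF isM_1] by (intro exI[of _ "-1"]) (simp add: r phi_m1)
    next
      case 2
      have r: "X i j * X i t = -(\<phi> (inverse qq) * (X i t * X i j))" using Suc.prems by (intro R2) auto
      have r2: "X k t * X i j = -(\<phi> qq * (X i j * X k t))" using flip[OF r] 2 by simp
      have "(X k t * X i j) * colQ t (Suc k) = (-(\<phi> qq * (X i j * X k t))) * colQ t (Suc k)" by (simp only: r2)
      also have "\<dots> = \<phi> (-qq) * ((X i j * X k t) * colQ t (Suc k))" by (simp only: phi_neg mult_minus_left mult.assoc)
      finally show ?thesis using isM_neg[OF isM_qq] by blast
    next
      case 3
      have r: "X k t * X i j = -(X i j * X k t) + (\<phi> (inverse qq) - \<phi> qq) * (X k j * X i t)"
        using Suc.prems 3 km by (intro R4) auto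
      have z: "X i t * colQ t (Suc k) = 0" using Suc.prems 3 km by (intro ZL2) auto
      have "(X k t * X i j) * colQ t (Suc k) = -((X i j * X k t) * colQ t (Suc k)) + (\<phi> (inverse qq) - \<phi> qq) * (X k j * (X i t * colQ t (Suc k)))"
        by (simp add: r algebra_simps)
      then have "(X k t * X i j) * colQ t (Suc k) = \<phi> (-1) * ((X i j * X k t) * colQ t (Suc k))"
        using z by (simp add: phi_m1)
      then show ?thesis using isM_neg[OF isM_1] by blast
    qed
  qed
  then obtain e where e: "isM e" "(X k t * X i j) * colQ t (Suc k) = \<phi> e * ((X i j * X k t) * colQ t (Suc k))" by blast
  have "colQ t k * X i j = X k t * (colQ t (Suc k) * X i j)" using km by (simp add: colQ_cons mult.assoc)
  also have "\<dots> = \<phi> c * ((X k t * X i j) * colQ t (Suc k))" using c by (simp add: mult.assoc cpull[OF phi_cen, of "X k t"])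
  also have "\<dots> = \<phi> c * (\<phi> e * ((X i j * X k t) * colQ t (Suc k)))" using e by simp
  also have "\<dots> = \<phi> (c*e) * (X i j * colQ t k)" using km by (simp add: phi_mult colQ_cons mult.assoc)
  finally show ?case unfolding QC_def using isM_mult[OF c(1) e(1)] by blast
qed

end



lemma prod_list_concat': "prod_list (concat xss) = prod_list (map prod_list xss)"
  by (induction xss) simp_all

lemma prod_list_map_1: "(\<And>x. x \<in> set xs \<Longrightarrow> f x = 1) \<Longrightarrow> prod_list (map f xs) = 1"
  by (induction xs) simp_all

lemma fl_lt: "filter (\<lambda>s. s < i) [a..<b] = [a..<min i b]"
proof (induction b)
  case 0 show ?case by simp
next
  case (Suc b)
  show ?case
  proof (cases "b < i")
    case True
    then have "min i (Suc b) = Suc b" "min i b = b" by auto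
    then show ?thesis using Suc True by simp
  next
    case False
    then have "min i (Suc b) = i" "min i b = i" by auto
    then show ?thesis using Suc False by simp
  qed
qed

lemma fl_gt: "filter (\<lambda>s. i < s) [a..<b] = [max a (Suc i)..<b]"
  by (induction b) (auto simp: max_def)

lemma fl_cong: "(\<And>s. a \<le> s \<Longrightarrow> s < b \<Longrightarrow> P s = Q s) \<Longrightarrow> filter P [a..<b] = filter Q [a..<b]"
  by (rule filter_cong) auto

context uqloc begin

definition colG where
  "colG S t = prod_list (map (\<lambda>(i,j). X i j) (filter (\<lambda>p. p \<in> S) (map (\<lambda>i. (i,t)) [1..<m+1])))"

lemma FI_cols: "FI m n \<phi> F S = prod_list (map (colG S) (rev [m+1..<m+n+1]))"
  unfolding FI_def I1_list_def colG_def by (simp add: filter_concat map_concat prod_list_concat' comp_def)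

lemma upt_split3: assumes "m < j" "j \<le> m+n"
  shows "rev [m+1..<m+n+1] = rev [Suc j..<m+n+1] @ j # rev [m+1..<j]"
proof -
  have "[m+1..<m+n+1] = [m+1..<j] @ [j..<m+n+1]"
    using upt_add_eq_append[of "m+1" j "m+n+1-j"] assms by simp
  moreover have "[j..<m+n+1] = j # [Suc j..<m+n+1]" using assms by (simp add: upt_conv_Cons del: upt_Suc)
  ultimately show ?thesis by simp
qed

lemma FI_split: "m < j \<Longrightarrow> j \<le> m+n \<Longrightarrow> FI m n \<phi> F S =
   prod_list (map (colG S) (rev [Suc j..<m+n+1])) * (colG S j * prod_list (map (colG S) (rev [m+1..<j])))"
  using FI_cols[of S] upt_split3 by (simp del: upt_Suc)

lemma colG_eval: "colG S t = prod_list (map (\<lambda>s. X s t) (filter (\<lambda>s. (s,t) \<in> S) [1..<m+1]))"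
  by (simp add: colG_def filter_map comp_def)

lemma claim1: assumes ij: "(i,j) \<in> I1 m n"
  shows "\<exists>c. isM c \<and> X i j * FI m n \<phi> F {p \<in> I1 m n. prec p (i,j)}
     = \<phi> c * FI m n \<phi> F {p \<in> I1 m n. prec p (i,j) \<or> p = (i,j)}"
proof -
  have i1: "1 \<le> i" "i \<le> m" "m < j" "j \<le> m+n" using ij by (auto simp: I1_def)
  define S1 where "S1 = {p \<in> I1 m n. prec p (i,j)}"
  define S2 where "S2 = {p \<in> I1 m n. prec p (i,j) \<or> p = (i,j)}"
  define hi where "hi = rev [Suc j..<m+n+1]"
  define lo where "lo = rev [m+1..<j]"
  define H where "H = prod_list (map (\<lambda>t. colP t m) hi)"
  define C where "C = colP j (i-1)"
  have hiS: "map (colG S) hi = map (\<lambda>t. colP t m) hi" if "S = S1 \<or> S = S2" for S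
  proof (rule map_cong[OF refl])
    fix t assume "t \<in> set hi"
    then have t: "j < t" "t \<le> m+n" unfolding hi_def by auto
    have "filter (\<lambda>s. (s,t) \<in> S) [1..<m+1] = [1..<m+1]"
      using that t i1 by (intro filter_True) (auto simp: S1_def S2_def I1_def prec_def)
    then show "colG S t = colP t m" by (simp add: colG_eval colP_def)
  qed
  have loS: "prod_list (map (colG S) lo) = 1" if "S = S1 \<or> S = S2" for S
  proof (rule prod_list_map_1)
    fix t assume "t \<in> set lo"
    then have t: "m < t" "t < j" unfolding lo_def by auto
    have "filter (\<lambda>s. (s,t) \<in> S) [1..<m+1] = []"
      using that t i1 by (intro filter_False) (auto simp: S1_def S2_def I1_def prec_def)
    then show "colG S t = 1" by (simp add: colG_eval)
  qed
  have j1: "colG S1 j = C"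
  proof -
    have "filter (\<lambda>s. (s,j) \<in> S1) [1..<m+1] = filter (\<lambda>s. s < i) [1..<m+1]"
      using i1 by (intro fl_cong) (auto simp: S1_def I1_def prec_def)
    also have "\<dots> = [1..<i]" using i1 by (simp add: fl_lt min_def del: upt_Suc)
    finally show ?thesis using i1 by (simp add: colG_eval C_def colP_def del: upt_Suc)
  qed
  have j2: "colG S2 j = C * X i j"
  proof -
    have "filter (\<lambda>s. (s,j) \<in> S2) [1..<m+1] = filter (\<lambda>s. s < Suc i) [1..<m+1]"
      using i1 by (intro fl_cong) (auto simp: S2_def I1_def prec_def)
    also have "\<dots> = [1..<Suc i]" using i1 by (simp add: fl_lt min_def del: upt_Suc)
    finally have "colG S2 j = colP j i" by (simp add: colG_eval colP_def del: upt_Suc)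
    also have "\<dots> = C * X i j" using i1 colP_Suc[of j "i-1"] by (simp add: C_def)
    finally show ?thesis .
  qed
  have e1: "FI m n \<phi> F S1 = H * C"
  proof -
    have "FI m n \<phi> F S1 = prod_list (map (colG S1) hi) * (colG S1 j * prod_list (map (colG S1) lo))"
      unfolding hi_def lo_def by (rule FI_split[OF i1(3,4)])
    also have "\<dots> = H * C" unfolding H_def hiS[of S1, OF disjI1[OF refl]] loS[of S1, OF disjI1[OF refl]] j1 by simp
    finally show ?thesis .
  qed
  have e2: "FI m n \<phi> F S2 = H * (C * X i j)"
  proof -
    have "FI m n \<phi> F S2 = prod_list (map (colG S2) hi) * (colG S2 j * prod_list (map (colG S2) lo))"
      unfolding hi_def lo_def by (rule FI_split[OF i1(3,4)])
    also have "\<dots> = H * (C * X i j)" unfolding H_def hiS[of S2, OF disjI2[OF refl]] loS[of S2, OF disjI2[OF refl]] j2 by simp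
    finally show ?thesis .
  qed
  have qH: "QC (X i j) H" unfolding H_def
  proof (rule QC_prod_r)
    fix y assume "y \<in> set (map (\<lambda>t. colP t m) hi)"
    then obtain t where t: "t \<in> set hi" "y = colP t m" by auto
    then have "j < t" "t \<le> m+n" unfolding hi_def by auto
    then show "QC (X i j) y" using t i1 by (intro Col1[of i j t m, simplified t(2)[symmetric]]) auto
  qed
  have qC: "QC (X i j) C" unfolding C_def colP_def
  proof (rule QC_prod_r)
    fix y assume "y \<in> set (map (\<lambda>s. X s j) [1..<Suc (i-1)])"
    then obtain s where s: "1 \<le> s" "s < i" "y = X s j" using i1 by auto
    have "X i j * X s j = -(\<phi> qq * (X s j * X i j))" using s i1 by (intro R1) auto
    then show "QC (X i j) y" using s by (simp add: QC_negq)
  qed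
  obtain c where c: "isM c" "X i j * (H * C) = \<phi> c * ((H * C) * X i j)"
    using QC_mult_r[OF qH qC] unfolding QC_def by blast
  show ?thesis
    using c e1 e2 unfolding S1_def[symmetric] S2_def[symmetric] by (auto simp: mult.assoc)
qed

lemma claim2: assumes ij: "(i,j) \<in> I1 m n"
  shows "\<exists>c. isM c \<and> FI m n \<phi> F {p \<in> I1 m n. prec (i,j) p} * X i j
     = \<phi> c * FI m n \<phi> F {p \<in> I1 m n. prec (i,j) p \<or> p = (i,j)}"
proof -
  have i1: "1 \<le> i" "i \<le> m" "m < j" "j \<le> m+n" using ij by (auto simp: I1_def)
  define S1 where "S1 = {p \<in> I1 m n. prec (i,j) p}"
  define S2 where "S2 = {p \<in> I1 m n. prec (i,j) p \<or> p = (i,j)}"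
  define hi where "hi = rev [Suc j..<m+n+1]"
  define lo where "lo = rev [m+1..<j]"
  define L where "L = prod_list (map (\<lambda>t. colP t m) lo)"
  define C where "C = colQ j (Suc i)"
  have loS: "map (colG S) lo = map (\<lambda>t. colP t m) lo" if "S = S1 \<or> S = S2" for S
  proof (rule map_cong[OF refl])
    fix t assume "t \<in> set lo"
    then have t: "m < t" "t < j" unfolding lo_def by auto
    have "filter (\<lambda>s. (s,t) \<in> S) [1..<m+1] = [1..<m+1]"
      using that t i1 by (intro filter_True) (auto simp: S1_def S2_def I1_def prec_def)
    then show "colG S t = colP t m" by (simp add: colG_eval colP_def)
  qed
  have hiS: "prod_list (map (colG S) hi) = 1" if "S = S1 \<or> S = S2" for S
  proof (rule prod_list_map_1)
    fix t assume "t \<in> set hi"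
    then have t: "j < t" "t \<le> m+n" unfolding hi_def by auto
    have "filter (\<lambda>s. (s,t) \<in> S) [1..<m+1] = []"
      using that t i1 by (intro filter_False) (auto simp: S1_def S2_def I1_def prec_def)
    then show "colG S t = 1" by (simp add: colG_eval)
  qed
  have j1: "colG S1 j = C"
  proof -
    have "filter (\<lambda>s. (s,j) \<in> S1) [1..<m+1] = filter (\<lambda>s. i < s) [1..<m+1]"
      using i1 by (intro fl_cong) (auto simp: S1_def I1_def prec_def)
    also have "\<dots> = [Suc i..<Suc m]" using i1 by (simp add: fl_gt max_def del: upt_Suc)
    finally show ?thesis using i1 by (simp add: colG_eval C_def colQ_def del: upt_Suc)
  qed
  have j2: "colG S2 j = X i j * C"
  proof -
    have "filter (\<lambda>s. (s,j) \<in> S2) [1..<m+1] = filter (\<lambda>s. i - 1 < s) [1..<m+1]"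
      using i1 by (intro fl_cong) (auto simp: S2_def I1_def prec_def)
    also have "\<dots> = [i..<Suc m]" using i1 by (simp add: fl_gt max_def del: upt_Suc)
    finally have "colG S2 j = colQ j i" by (simp add: colG_eval colQ_def del: upt_Suc)
    also have "\<dots> = X i j * C" using i1 colQ_cons[of i j] by (simp add: C_def)
    finally show ?thesis .
  qed
  have e1: "FI m n \<phi> F S1 = C * L"
  proof -
    have "FI m n \<phi> F S1 = prod_list (map (colG S1) hi) * (colG S1 j * prod_list (map (colG S1) lo))"
      unfolding hi_def lo_def by (rule FI_split[OF i1(3,4)])
    also have "\<dots> = C * L" unfolding L_def hiS[of S1, OF disjI1[OF refl]] loS[of S1, OF disjI1[OF refl]] j1 by simp
    finally show ?thesis .
  qed
  have e2: "FI m n \<phi> F S2 = (X i j * C) * L"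
  proof -
    have "FI m n \<phi> F S2 = prod_list (map (colG S2) hi) * (colG S2 j * prod_list (map (colG S2) lo))"
      unfolding hi_def lo_def by (rule FI_split[OF i1(3,4)])
    also have "\<dots> = (X i j * C) * L" unfolding L_def hiS[of S2, OF disjI2[OF refl]] loS[of S2, OF disjI2[OF refl]] j2 by simp
    finally show ?thesis .
  qed
  have qL: "QC L (X i j)" unfolding L_def
  proof (rule QC_prod_l)
    fix y assume "y \<in> set (map (\<lambda>t. colP t m) lo)"
    then obtain t where t: "t \<in> set lo" "y = colP t m" by auto
    then have "m < t" "t < j" unfolding lo_def by auto
    then have "QC (colQ t 1) (X i j)" using t i1 by (intro Col2) auto
    then show "QC y (X i j)" unfolding colQ_1 t(2) .
  qed
  have qC: "QC C (X i j)" unfolding C_def colQ_def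
  proof (rule QC_prod_l)
    fix y assume "y \<in> set (map (\<lambda>s. X s j) [Suc i..<Suc m])"
    then obtain s where s0: "s \<in> set [Suc i..<Suc m]" "y = X s j" by (auto simp del: upt_Suc)
    then have s: "i < s" "s \<le> m" "y = X s j" by (auto simp del: upt_Suc)
    have "X s j * X i j = -(\<phi> qq * (X i j * X s j))" using s i1 by (intro R1) auto
    then show "QC y (X i j)" using s by (simp add: QC_negq)
  qed
  obtain c where c: "isM c" "(C * L) * X i j = \<phi> c * (X i j * (C * L))"
    using QC_mult_l[OF qC qL] unfolding QC_def by blast
  show ?thesis
    using c e1 e2 unfolding S1_def[symmetric] S2_def[symmetric] by (auto simp: mult.assoc)
qed

end

theorem proposition5p4:
  fixes \<phi> :: "Cq \<Rightarrow> 'a::ring_1" and K Kinv E F :: "nat \<Rightarrow> 'a" and m n i j :: nat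
  assumes "1 \<le> m" and "1 \<le> n"
    and "uq_rels m n \<phi> K Kinv E F"
    and "(i, j) \<in> I1 m n"
  shows "(\<exists>(z1::int) (s1::Cq). s1 \<in> {1, -1} \<and>
            Froot m \<phi> F i j * FI m n \<phi> F {p \<in> I1 m n. prec p (i, j)}
              = \<phi> (s1 * qq powi z1) * FI m n \<phi> F {p \<in> I1 m n. prec p (i, j) \<or> p = (i, j)})
       \<and> (\<exists>(z2::int) (s2::Cq). s2 \<in> {1, -1} \<and>
            FI m n \<phi> F {p \<in> I1 m n. prec (i, j) p} * Froot m \<phi> F i j
              = \<phi> (s2 * qq powi z2) * FI m n \<phi> F {p \<in> I1 m n. prec (i, j) p \<or> p = (i, j)})"
proof -
  interpret U: uqloc m n \<phi> K Kinv E F using assms(1-3) by unfold_locales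
  obtain c where c: "isM c" "Froot m \<phi> F i j * FI m n \<phi> F {p \<in> I1 m n. prec p (i, j)}
              = \<phi> c * FI m n \<phi> F {p \<in> I1 m n. prec p (i, j) \<or> p = (i, j)}"
    using U.claim1[OF assms(4)] by blast
  obtain d where d: "isM d" "FI m n \<phi> F {p \<in> I1 m n. prec (i, j) p} * Froot m \<phi> F i j
              = \<phi> d * FI m n \<phi> F {p \<in> I1 m n. prec (i, j) p \<or> p = (i, j)}"
    using U.claim2[OF assms(4)] by blast
  from c(1) obtain s1 z1 where s1: "s1 \<in> {1,-1}" "c = s1 * qq powi z1" unfolding isM_def by blast
  from d(1) obtain s2 z2 where s2: "s2 \<in> {1,-1}" "d = s2 * qq powi z2" unfolding isM_def by blast
  show ?thesis using c(2) d(2) s1 s2 by blast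
qed


end
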